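(* Let $\phi$ be a (Lie group) endomorphism of $G$, and define maps $\alpha:\mathbb R^n\to\mathbb R^n$, $\beta:\mathbb R^m\to\mathbb R^n$, $\gamma:\mathbb R^n\to\mathbb R^m$, $\delta:\mathbb R^m\to\mathbb R^m$ by $$\phi(x,0)=(\alpha(x),\gamma(x)),\qquad \phi(0,t)=(\beta(t),\delta(t)),$$ i.e. $\alpha=\pi_{\mathbb R^n}\circ\phi\circ j_{\mathbb R^n}$, $\beta=\pi_{\mathbb R^n}\circ\phi\circ j_{\mathbb R^m}$, $\gamma=\pi_{\mathbb R^m}\circ\phi\circ j_{\mathbb R^n}$, $\delta=\pi_{\mathbb R^m}\circ\phi\circ j_{\mathbb R^m}$, where $\pi$ and $j$ denote the projections onto and injections from the indicated factors of $\mathbb R^n\times\mathbb R^m$. Then $\phi$ is an automorphism of $G$ if and only if the following conditions hold: 1) $\alpha$ is the linear map with matrix $P_\tau\,\mathrm{diag}(c_1,\dots,c_n)$ for some nonzero real numbers $c_1,\dots,c_n$ and some permutation $\tau\in S_n$; 2) $\gamma=0$; 3) $\delta$ is the linear map with matrix $\left({}^t\Omega\,\Omega\right)^{-1}{}^t\Omega\,P_\tau\,\Omega$ (with the same $\tau$); 4) $\beta(t)=\sum_{k=0}^{\infty}\frac{(\delta(t)\cdot\Delta)^k}{(k+1)!}\,U t$ for all $t\in\mathbb R^m$, for some $U\in\mathbb R^{n\times m}$.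
   Context: Fix integers $1\le m\le n$. Let $\Delta_1,\dots,\Delta_m\in\mathbb R^{n\times n}$ be linearly independent, nonsingular, traceless diagonal matrices $\Delta_i=\mathrm{diag}(d_1^{(i)},\dots,d_n^{(i)})$ such that for each $i$, $d_k^{(i)}\neq d_j^{(i)}$ whenever $k\neq j$. For $t=(t_1,\dots,t_m)^T\in\mathbb R^m$ write $t\cdot\Delta=\sum_{i=1}^m t_i\Delta_i$ and $\eta(t)=e^{t\cdot\Delta}$. Let $G=\mathbb R^n\rtimes_\eta\mathbb R^m$ be the Lie group with underlying set $\mathbb R^n\times\mathbb R^m$ and multiplication $(x,t)(y,s)=(x+e^{t\cdot\Delta}y,\ t+s)$. Let $\Omega\in\mathbb R^{n\times m}$ be the matrix with entries $\Omega_{ij}=d_i^{(j)}$ (it is injective, so ${}^t\Omega\Omega$ is invertible). For $\tau\in S_n$ (permutations of $\{1,\dots,n\}$), $P_\tau$ denotes the permutation matrix obtained from $I_n$ by replacing, for each $1\le i\le n$, the $i$-th row by the $\tau^{-1}(i)$-th row. *)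

theory Defs
  imports "HOL-Analysis.Analysis"
begin

primrec matpow :: "real^'n^'n \<Rightarrow> nat \<Rightarrow> real^'n^'n" where
  "matpow A 0 = mat 1"
| "matpow A (Suc k) = A ** matpow A k"

definition mexp :: "real^'n^'n \<Rightarrow> real^'n^'n" where
  "mexp A = (\<Sum>k. (1 / fact k) *\<^sub>R matpow A k)"

definition diag_mat :: "('n \<Rightarrow> real) \<Rightarrow> real^'n^'n" where
  "diag_mat c = (\<chi> i j. if i = j then c i else 0)"

text \<open>Delta d i = diag(d_1^(i),...,d_n^(i)); d i k is d_k^(i).\<close>
definition Delta :: "('m \<Rightarrow> 'n \<Rightarrow> real) \<Rightarrow> 'm \<Rightarrow> real^'n^'n" where
  "Delta d i = diag_mat (d i)"

definition tDelta :: "('m \<Rightarrow> 'n \<Rightarrow> real) \<Rightarrow> real^'m \<Rightarrow> real^'n^'n" where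
  "tDelta d t = (\<Sum>i\<in>UNIV. (t $ i) *\<^sub>R Delta d i)"

definition Omega :: "('m::finite \<Rightarrow> 'n::finite \<Rightarrow> real) \<Rightarrow> real^'m^'n" where
  "Omega d = (\<chi> k i. d i k)"

definition Pmat :: "('n \<Rightarrow> 'n) \<Rightarrow> real^'n^'n" where
  "Pmat \<tau> = (\<chi> i j. if j = inv \<tau> i then 1 else 0)"

definition gmul :: "('m::finite \<Rightarrow> 'n::finite \<Rightarrow> real) \<Rightarrow> (real^'n) \<times> (real^'m) \<Rightarrow> (real^'n) \<times> (real^'m) \<Rightarrow> (real^'n) \<times> (real^'m)" where
  "gmul d g h = (fst g + mexp (tDelta d (snd g)) *v fst h, snd g + snd h)"

text \<open>Smoothness (C^infinity) on a finite-dimensional space: every iterated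
  directional derivative exists as a Frechet derivative everywhere.\<close>
fun iter_dd :: "'a::real_normed_vector list \<Rightarrow> ('a \<Rightarrow> 'b::real_normed_vector) \<Rightarrow> 'a \<Rightarrow> 'b" where
  "iter_dd [] f = f"
| "iter_dd (v # vs) f = (\<lambda>x. frechet_derivative (iter_dd vs f) (at x) v)"

definition smooth :: "('a::real_normed_vector \<Rightarrow> 'b::real_normed_vector) \<Rightarrow> bool" where
  "smooth f \<longleftrightarrow> (\<forall>vs x. iter_dd vs f differentiable (at x))"

definition lie_endo :: "('m::finite \<Rightarrow> 'n::finite \<Rightarrow> real) \<Rightarrow> ((real^'n) \<times> (real^'m) \<Rightarrow> (real^'n) \<times> (real^'m)) \<Rightarrow> bool" where
  "lie_endo d \<phi> \<longleftrightarrow> smooth \<phi> \<and> (\<forall>g h. \<phi> (gmul d g h) = gmul d (\<phi> g) (\<phi> h))"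

definition lie_auto :: "('m::finite \<Rightarrow> 'n::finite \<Rightarrow> real) \<Rightarrow> ((real^'n) \<times> (real^'m) \<Rightarrow> (real^'n) \<times> (real^'m)) \<Rightarrow> bool" where
  "lie_auto d \<phi> \<longleftrightarrow> lie_endo d \<phi> \<and> bij \<phi> \<and> lie_endo d (inv \<phi>)"

end

theory Submission
  imports Defs "HOL-Combinatorics.Permutations"
begin

lemma if0_mult: "(if P then a else (0::real)) * b = (if P then a * b else 0)" by auto
lemma mult_if0: "b * (if P then a else (0::real)) = (if P then b * a else 0)" by auto

lemma diag_mat_mult: "diag_mat a ** diag_mat b = diag_mat (\<lambda>i. a i * b i)"
  unfolding diag_mat_def matrix_matrix_mult_def
  by (simp add: vec_eq_iff if0_mult mult_if0 sum.delta)

lemma diag_mat_one: "diag_mat (\<lambda>i. 1) = mat 1"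
  unfolding diag_mat_def mat_def by simp

lemma diag_mat_mulv: "diag_mat a *v x = (\<chi> i. a i * x $ i)"
  unfolding diag_mat_def matrix_vector_mult_def
  by (simp add: vec_eq_iff if0_mult mult_if0 sum.delta)

lemma matpow_diag: "matpow (diag_mat a) k = diag_mat (\<lambda>i. a i ^ k)"
  by (induction k) (simp_all add: diag_mat_one diag_mat_mult)

lemma diag_sums:
  assumes "\<And>i. (\<lambda>k. f k * a i ^ k) sums S i"
  shows "(\<lambda>k. f k *\<^sub>R diag_mat (\<lambda>i. a i ^ k)) sums diag_mat S"
proof -
  have s: "(\<lambda>n. \<Sum>k<n. f k *\<^sub>R diag_mat (\<lambda>i. a i ^ k)) 
          = (\<lambda>n. \<chi> i j. if i = j then (\<Sum>k<n. f k * a i ^ k) else (0::real))"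
    unfolding diag_mat_def by (auto simp: vec_eq_iff sum_component)
  show ?thesis unfolding sums_def s
    unfolding diag_mat_def
    apply (intro tendsto_intros)
    using assms unfolding sums_def by auto
qed

lemma tDelta_diag: "tDelta d t = diag_mat (\<lambda>k. (Omega d *v t) $ k)"
  unfolding tDelta_def Delta_def diag_mat_def Omega_def matrix_vector_mult_def
  by (auto simp: vec_eq_iff sum_component mult.commute)

lemma mexp_diag: "mexp (diag_mat a) = diag_mat (\<lambda>i. exp (a i))"
proof -
  have "(\<lambda>k. (1 / fact k) *\<^sub>R matpow (diag_mat a) k) sums diag_mat (\<lambda>i. exp (a i))"
    unfolding matpow_diag
    by (rule diag_sums) (use exp_converges[of "a _"] in \<open>auto simp: divide_inverse mult.commute scaleR_conv_of_real\<close>)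
  then show ?thesis unfolding mexp_def by (rule sums_unique[symmetric])
qed

lemma mexp_tDelta: "mexp (tDelta d t) = diag_mat (\<lambda>k. exp ((Omega d *v t) $ k))"
  by (simp add: tDelta_diag mexp_diag)

lemma phi1_sums:
  "(\<lambda>k. (1 / fact (k + 1)) * z ^ k) sums (if z = 0 then 1 else (exp z - 1) / (z::real))"
proof (cases "z = 0")
  case True
  have "(\<lambda>k. (1 / fact (k + 1)) * (0::real) ^ k) sums ((1 / fact (0 + 1)) :: real)"
    by (rule powser_sums_zero)
  then show ?thesis using True by simp
next
  case False
  have "(\<lambda>n. z ^ n /\<^sub>R fact n) sums exp z" by (rule exp_converges)
  then have "(\<lambda>n. z ^ Suc n /\<^sub>R fact (Suc n)) sums (exp z - z ^ 0 /\<^sub>R fact 0)"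
    using sums_Suc_iff[of "\<lambda>n. z ^ n /\<^sub>R fact n" "exp z - z ^ 0 /\<^sub>R fact 0"] by simp
  then have "(\<lambda>n. (z ^ Suc n /\<^sub>R fact (Suc n)) / z) sums ((exp z - 1) / z)"
    by (intro sums_divide) simp
  moreover have "(\<lambda>n. (z ^ Suc n /\<^sub>R fact (Suc n)) / z) = (\<lambda>k. (1 / fact (k + 1)) * z ^ k)"
    using False by (auto simp: fun_eq_iff divide_simps simp del: fact_Suc)
  ultimately show ?thesis using False by simp
qed

lemma additive_cont_linear:
  fixes f :: "'a::real_normed_vector \<Rightarrow> 'b::real_normed_vector"
  assumes add: "\<And>x y. f (x + y) = f x + f y" and cont: "continuous_on UNIV f"
  shows "linear f"
proof -
  have f0: "f 0 = 0" using add[of 0 0] by simp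
  have fm: "f (- x) = - f x" for x
    using add[of x "-x"] f0 by (simp add: eq_neg_iff_add_eq_0 add.commute)
  have fn: "f (of_nat n *\<^sub>R x) = of_nat n *\<^sub>R f x" for n x
    by (induction n) (simp_all add: f0 add scaleR_add_left)
  have fi: "f (of_int i *\<^sub>R x) = of_int i *\<^sub>R f x" for i x
  proof (cases "i \<ge> 0")
    case True
    then obtain n where "i = int n" by (metis nonneg_eq_int)
    then show ?thesis using fn by simp
  next
    case False
    then obtain n where "i = - int n" by (metis le_cases neg_eq_iff_add_eq_0 nonneg_eq_int add.commute le_minus_iff neg_0_le_iff_le)
    then show ?thesis using fn[of n x] fm[of "of_nat n *\<^sub>R x"] by simp
  qed
  have fq: "f (q *\<^sub>R x) = q *\<^sub>R f x" if qR: "q \<in> \<rat>" for q x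
  proof -
    obtain i n where q: "q = real_of_int i / real n" and n: "n \<noteq> 0"
      using qR[unfolded Rats_eq_int_div_nat] by auto
    have "of_nat n *\<^sub>R f (q *\<^sub>R x) = f (of_nat n *\<^sub>R (q *\<^sub>R x))" by (rule fn[symmetric])
    also have "of_nat n *\<^sub>R (q *\<^sub>R x) = of_int i *\<^sub>R x" using n q by simp
    also have "f \<dots> = of_int i *\<^sub>R f x" by (rule fi)
    finally have "real n *\<^sub>R f (q *\<^sub>R x) = real_of_int i *\<^sub>R f x" by simp
    then have "(1 / real n) *\<^sub>R (real n *\<^sub>R f (q *\<^sub>R x)) = (1 / real n) *\<^sub>R (real_of_int i *\<^sub>R f x)"
      by simp
    then show ?thesis using n q by (simp add: divide_inverse mult.commute)
  qed
  have "f (r *\<^sub>R x) = r *\<^sub>R f x" for r x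
  proof -
    have c: "continuous_on (closure \<rat>) (\<lambda>r. f (r *\<^sub>R x) - r *\<^sub>R f x)"
      by (intro continuous_intros continuous_on_compose2[OF cont]) auto
    show ?thesis
      using continuous_constant_on_closure[OF c, of 0 r] fq Rats_closure_real by auto
  qed
  then show ?thesis by (intro linearI) (simp_all add: add)
qed

lemma smoothD: "smooth f \<Longrightarrow> (iter_dd vs f has_derivative frechet_derivative (iter_dd vs f) (at x)) (at x)"
  unfolding smooth_def using frechet_derivative_works by blast

lemma iter_post:
  assumes sf: "smooth f" and K: "bounded_linear K"
  shows "iter_dd vs (\<lambda>x. K (f x)) = (\<lambda>x. K (iter_dd vs f x))"
proof (induction vs)
  case Nil then show ?case by simp
next
  case (Cons v vs)
  have "frechet_derivative (\<lambda>y. K (iter_dd vs f y)) (at x) v = K (frechet_derivative (iter_dd vs f) (at x) v)" for x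
  proof -
    have "((\<lambda>y. K (iter_dd vs f y)) has_derivative (\<lambda>h. K (frechet_derivative (iter_dd vs f) (at x) h))) (at x)"
      by (rule bounded_linear.has_derivative[OF K smoothD[OF sf]])
    from frechet_derivative_at[OF this] show ?thesis by metis
  qed
  then show ?case using Cons by simp
qed

lemma smooth_post:
  assumes sf: "smooth f" and K: "bounded_linear K"
  shows "smooth (\<lambda>x. K (f x))"
  unfolding smooth_def iter_post[OF assms]
  using bounded_linear.has_derivative[OF K smoothD[OF sf]] differentiableI by blast

lemma iter_pre:
  assumes sf: "smooth f" and M: "bounded_linear M"
  shows "iter_dd vs (\<lambda>x. f (M x)) = (\<lambda>x. iter_dd (map M vs) f (M x))"
proof (induction vs)
  case Nil then show ?case by simp
next
  case (Cons v vs)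
  have "frechet_derivative (\<lambda>y. iter_dd (map M vs) f (M y)) (at x) v = frechet_derivative (iter_dd (map M vs) f) (at (M x)) (M v)" for x
  proof -
    have "((\<lambda>y. iter_dd (map M vs) f (M y)) has_derivative (\<lambda>h. frechet_derivative (iter_dd (map M vs) f) (at (M x)) (M h))) (at x)"
      by (rule has_derivative_compose[OF bounded_linear_imp_has_derivative[OF M] smoothD[OF sf]])
    from frechet_derivative_at[OF this] show ?thesis by metis
  qed
  then show ?case using Cons by simp
qed

lemma smooth_pre:
  assumes sf: "smooth f" and M: "bounded_linear M"
  shows "smooth (\<lambda>x. f (M x))"
  unfolding smooth_def iter_pre[OF assms]
  using has_derivative_compose[OF bounded_linear_imp_has_derivative[OF M] smoothD[OF sf]] differentiableI by blast

lemma iter_add: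
  assumes sf: "smooth f" and sg: "smooth g"
  shows "iter_dd vs (\<lambda>x. f x + g x) = (\<lambda>x. iter_dd vs f x + iter_dd vs g x)"
proof (induction vs)
  case Nil then show ?case by simp
next
  case (Cons v vs)
  have "frechet_derivative (\<lambda>y. iter_dd vs f y + iter_dd vs g y) (at x) v
     = frechet_derivative (iter_dd vs f) (at x) v + frechet_derivative (iter_dd vs g) (at x) v" for x
  proof -
    have "((\<lambda>y. iter_dd vs f y + iter_dd vs g y) has_derivative (\<lambda>h. frechet_derivative (iter_dd vs f) (at x) h + frechet_derivative (iter_dd vs g) (at x) h)) (at x)"
      by (rule has_derivative_add[OF smoothD[OF sf] smoothD[OF sg]])
    from frechet_derivative_at[OF this] show ?thesis by metis
  qed
  then show ?case using Cons by simp
qed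

lemma smooth_add:
  assumes sf: "smooth f" and sg: "smooth g"
  shows "smooth (\<lambda>x. f x + g x)"
  unfolding smooth_def iter_add[OF assms]
  using has_derivative_add[OF smoothD[OF sf] smoothD[OF sg]] differentiableI by blast

lemma iter_linear:
  assumes L: "bounded_linear L"
  shows "iter_dd vs L = L \<or> (\<exists>c. iter_dd vs L = (\<lambda>x. c))"
proof (induction vs)
  case Nil then show ?case by simp
next
  case (Cons v vs)
  then show ?case
  proof
    assume h: "iter_dd vs L = L"
    have "frechet_derivative L (at x) = L" for x
      using frechet_derivative_at[OF bounded_linear_imp_has_derivative[OF L]] by metis
    then show ?case using h by auto
  next
    assume "\<exists>c. iter_dd vs L = (\<lambda>x. c)"
    then show ?case by auto
  qed
qed

lemma smooth_linear:
  assumes L: "bounded_linear L"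
  shows "smooth L"
  unfolding smooth_def
proof (intro allI)
  fix vs x
  from iter_linear[OF L, of vs] show "iter_dd vs L differentiable at x"
    using bounded_linear_imp_differentiable[OF L] by auto
qed

definition ee :: "('m::finite \<Rightarrow> 'n::finite \<Rightarrow> real) \<Rightarrow> real^'m \<Rightarrow> real^'n \<Rightarrow> real^'n" where
  "ee d t y = (\<chi> k. exp ((Omega d *v t) $ k) * y $ k)"

lemma gmul_ee: "gmul d g h = (fst g + ee d (snd g) (fst h), snd g + snd h)"
  by (simp add: gmul_def mexp_tDelta diag_mat_mulv ee_def)

lemma ee_0 [simp]: "ee d t 0 = 0"
  by (simp add: ee_def vec_eq_iff)

lemma ee_0t [simp]: "ee d 0 y = y"
  by (simp add: ee_def vec_eq_iff)

lemma ee_nth: "ee d t y $ k = exp ((Omega d *v t) $ k) * y $ k"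
  by (simp add: ee_def)

lemma Omega_nth: "(Omega d *v t) $ k = (\<Sum>i\<in>UNIV. d i k * t $ i)"
  by (simp add: Omega_def matrix_vector_mult_def)

lemma Omega_axis: "(Omega d *v axis i r) $ k = d i k * r"
  by (simp add: Omega_nth axis_def mult_if0 sum.delta)

locale hom_setup =
  fixes d :: "'m::finite \<Rightarrow> 'n::finite \<Rightarrow> real"
    and \<phi> :: "(real^'n) \<times> (real^'m) \<Rightarrow> (real^'n) \<times> (real^'m)"
  assumes hom: "\<And>g h. \<phi> (gmul d g h) = gmul d (\<phi> g) (\<phi> h)"
    and nonsing: "\<And>i k. d i k \<noteq> 0"
begin

lemma snd_hom: "snd (\<phi> (gmul d g h)) = snd (\<phi> g) + snd (\<phi> h)"
  using hom[of g h] by (simp add: gmul_ee)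

lemma snd0: "snd (\<phi> (x, 0)) = 0"
proof -
  define \<sigma> where "\<sigma> g = snd (\<phi> g)" for g
  have sh: "\<sigma> (gmul d g h) = \<sigma> g + \<sigma> h" for g h unfolding \<sigma>_def by (rule snd_hom)
  have s00: "\<sigma> (0, 0) = 0" using sh[of "(0,0)" "(0,0)"] by (simp add: gmul_ee)
  obtain i0 :: 'm where True by blast
  define t where "t = axis i0 (1::real)"
  have Ot: "(Omega d *v t) $ k = d i0 k" for k unfolding t_def by (simp add: Omega_axis)
  define y where "y = (\<chi> k. x $ k / (exp (d i0 k) - 1))"
  have ne: "exp (d i0 k) - 1 \<noteq> 0" for k using nonsing[of i0 k] by simp
  have ey: "ee d t y - y = x"
  proof -
    have "exp (d i0 k) * (x $ k / (exp (d i0 k) - 1)) - x $ k / (exp (d i0 k) - 1) = x $ k" for k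
      using ne[of k] by (simp add: divide_simps) (simp add: algebra_simps)
    then show ?thesis by (simp add: vec_eq_iff ee_nth Ot y_def)
  qed
  have g1: "gmul d (gmul d (gmul d (0, t) (y, 0)) (0, -t)) (-y, 0) = (x, 0)"
    using ey by (simp add: gmul_ee)
  have "\<sigma> (x, 0) = \<sigma> (0, t) + \<sigma> (y, 0) + \<sigma> (0, -t) + \<sigma> (-y, 0)"
    using g1 sh by metis
  moreover have "\<sigma> (0, t) + \<sigma> (0, -t) = 0"
    using sh[of "(0,t)" "(0,-t)"] s00 by (simp add: gmul_ee)
  moreover have "\<sigma> (y, 0) + \<sigma> (-y, 0) = 0"
    using sh[of "(y,0)" "(-y,0)"] s00 by (simp add: gmul_ee)
  moreover have "\<sigma> (0, t) + \<sigma> (y, 0) + \<sigma> (0, -t) + \<sigma> (-y, 0)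
      = (\<sigma> (0, t) + \<sigma> (0, -t)) + (\<sigma> (y, 0) + \<sigma> (-y, 0))" by (simp add: ac_simps)
  ultimately show ?thesis unfolding \<sigma>_def by simp
qed

lemma decomp: "\<phi> (x, t) = (fst (\<phi> (x, 0)) + fst (\<phi> (0, t)), snd (\<phi> (0, t)))"
proof -
  have "\<phi> (x, t) = \<phi> (gmul d (x, 0) (0, t))" by (simp add: gmul_ee)
  also have "\<dots> = gmul d (\<phi> (x, 0)) (\<phi> (0, t))" by (rule hom)
  finally show ?thesis using snd0[of x] by (simp add: gmul_ee)
qed

lemma alpha_add: "fst (\<phi> (x + y, 0)) = fst (\<phi> (x, 0)) + fst (\<phi> (y, 0))"
proof -
  have "\<phi> (x + y, 0) = \<phi> (gmul d (x, 0) (y, 0))" by (simp add: gmul_ee)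
  also have "\<dots> = gmul d (\<phi> (x, 0)) (\<phi> (y, 0))" by (rule hom)
  finally show ?thesis using snd0[of x] by (simp add: gmul_ee)
qed

lemma conj: "fst (\<phi> (ee d t x, 0)) = ee d (snd (\<phi> (0, t))) (fst (\<phi> (x, 0)))"
proof -
  have "\<phi> (ee d t x, t) = \<phi> (gmul d (0, t) (x, 0))" by (simp add: gmul_ee)
  also have "\<dots> = gmul d (\<phi> (0, t)) (\<phi> (x, 0))" by (rule hom)
  finally have "\<phi> (ee d t x, t) = gmul d (\<phi> (0, t)) (\<phi> (x, 0))" .
  then show ?thesis using decomp[of "ee d t x" t] decomp[of x 0] snd0[of x]
    by (simp add: gmul_ee)
qed

lemma beta_coc: "fst (\<phi> (0, t + s)) = fst (\<phi> (0, t)) + ee d (snd (\<phi> (0, t))) (fst (\<phi> (0, s)))"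
  and delta_add: "snd (\<phi> (0, t + s)) = snd (\<phi> (0, t)) + snd (\<phi> (0, s))"
proof -
  have "\<phi> (0, t + s) = \<phi> (gmul d (0, t) (0, s))" by (simp add: gmul_ee)
  also have "\<dots> = gmul d (\<phi> (0, t)) (\<phi> (0, s))" by (rule hom)
  finally have h: "\<phi> (0, t + s) = gmul d (\<phi> (0, t)) (\<phi> (0, s))" .
  then show "fst (\<phi> (0, t + s)) = fst (\<phi> (0, t)) + ee d (snd (\<phi> (0, t))) (fst (\<phi> (0, s)))"
    by (simp add: gmul_ee)
  from h show "snd (\<phi> (0, t + s)) = snd (\<phi> (0, t)) + snd (\<phi> (0, s))"
    by (simp add: gmul_ee)
qed

end

lemma Pmat_mulv: "(Pmat \<tau> *v x) $ i = x $ (inv \<tau> i)"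
  unfolding Pmat_def matrix_vector_mult_def
  by (simp add: if0_mult sum.delta')

lemma PD_nth: "((Pmat \<tau> ** diag_mat c) *v x) $ i = c (inv \<tau> i) * x $ (inv \<tau> i)"
  by (simp add: matrix_vector_mul_assoc[symmetric] Pmat_mulv diag_mat_mulv)

lemma basis_exp: "x = (\<Sum>k\<in>UNIV. x $ k *\<^sub>R axis k (1::real))"
  by (simp add: vec_eq_iff sum_component axis_def mult_if0 sum.delta')

lemma Omega_inj:
  fixes d :: "'m::finite \<Rightarrow> 'n::finite \<Rightarrow> real"
  assumes indep: "\<forall>c::'m \<Rightarrow> real. (\<Sum>i\<in>UNIV. c i *\<^sub>R Delta d i) = 0 \<longrightarrow> (\<forall>i. c i = 0)"
    and z: "Omega d *v z = (0::real^'n::finite)"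
  shows "z = (0::real^'m::finite)"
proof -
  have "(\<Sum>i\<in>UNIV. z $ i *\<^sub>R Delta d i) = tDelta d z" by (simp add: tDelta_def)
  also have "\<dots> = 0" unfolding tDelta_diag z by (simp add: diag_mat_def vec_eq_iff)
  finally show ?thesis using indep by (auto simp: vec_eq_iff)
qed

lemma OtO_inv:
  fixes d :: "'m::finite \<Rightarrow> 'n::finite \<Rightarrow> real"
  assumes indep: "\<forall>c::'m \<Rightarrow> real. (\<Sum>i\<in>UNIV. c i *\<^sub>R Delta d i) = 0 \<longrightarrow> (\<forall>i. c i = 0)"
  shows "matrix_inv (transpose (Omega d) ** Omega d) ** (transpose (Omega d) ** Omega d) = mat (1::real)"
proof -
  let ?A = "transpose (Omega d) ** (Omega d :: real^'m::finite^'n::finite)"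
  have "inj ((*v) ?A)"
  proof (rule injI)
    fix x y assume "?A *v x = ?A *v y"
    then have h: "?A *v (x - y) = 0" by (simp add: matrix_vector_mult_diff_distrib)
    have "inner (Omega d *v (x - y)) (Omega d *v (x - y)) = inner ((Omega d *v (x - y)) v* Omega d) (x - y)"
      by (simp add: dot_lmul_matrix)
    also have "(Omega d *v (x - y)) v* Omega d = ?A *v (x - y)"
      by (simp add: matrix_vector_mul_assoc[symmetric])
    finally have "Omega d *v (x - y) = 0" using h by simp
    then have "x - y = 0" using Omega_inj[OF indep] by blast
    then show "x = y" by simp
  qed
  then have "invertible ?A" using invertible_left_inverse matrix_left_invertible_injective by blast
  then have "\<exists>B. ?A ** B = mat 1 \<and> B ** ?A = mat 1" unfolding invertible_def by blast
  from someI_ex[OF this] show ?thesis unfolding matrix_inv_def by blast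
qed

context hom_setup
begin

lemma omega_delta:
  assumes \<tau>: "\<tau> permutes UNIV" and c: "\<forall>k. c k \<noteq> 0"
    and al: "\<forall>x. fst (\<phi> (x, 0)) = (Pmat \<tau> ** diag_mat c) *v x"
  shows "Omega d *v snd (\<phi> (0, t)) = Pmat \<tau> *v (Omega d *v t)"
proof -
  have key: "(Omega d *v t) $ k = (Omega d *v snd (\<phi> (0, t))) $ (\<tau> k)" for k
  proof -
    have e: "ee d t (axis k 1) = axis k (exp ((Omega d *v t) $ k))"
      by (simp add: vec_eq_iff ee_nth axis_def)
    have "fst (\<phi> (ee d t (axis k 1), 0)) $ (\<tau> k) = ee d (snd (\<phi> (0, t))) (fst (\<phi> (axis k 1, 0))) $ (\<tau> k)"
      using conj by simp
    then have "c k * exp ((Omega d *v t) $ k) = exp ((Omega d *v snd (\<phi> (0, t))) $ (\<tau> k)) * c k"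
      unfolding e ee_nth by (simp add: al PD_nth permutes_inverses[OF \<tau>] axis_def)
    then show ?thesis using c by simp
  qed
  show ?thesis
  proof (subst vec_eq_iff, intro allI)
    fix i
    show "(Omega d *v snd (\<phi> (0, t))) $ i = (Pmat \<tau> *v (Omega d *v t)) $ i"
      using key[of "inv \<tau> i"] unfolding Pmat_mulv permutes_inverses[OF \<tau>] by simp
  qed
qed

lemma delta_formula:
  assumes indep: "\<forall>c::'m \<Rightarrow> real. (\<Sum>i\<in>UNIV. c i *\<^sub>R Delta d i) = 0 \<longrightarrow> (\<forall>i. c i = 0)"
    and \<tau>: "\<tau> permutes UNIV" and c: "\<forall>k. c k \<noteq> 0"
    and al: "\<forall>x. fst (\<phi> (x, 0)) = (Pmat \<tau> ** diag_mat c) *v x"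
  shows "snd (\<phi> (0, t)) = (matrix_inv (transpose (Omega d) ** Omega d) ** transpose (Omega d)
                        ** Pmat \<tau> ** Omega d) *v t"
proof -
  let ?M = "matrix_inv (transpose (Omega d) ** Omega d)"
  have "(?M ** transpose (Omega d) ** Pmat \<tau> ** Omega d) *v t
      = ?M *v (transpose (Omega d) *v (Pmat \<tau> *v (Omega d *v t)))"
    by (simp add: matrix_vector_mul_assoc matrix_mul_assoc)
  also have "\<dots> = ?M *v (transpose (Omega d) *v (Omega d *v snd (\<phi> (0, t))))"
    using omega_delta[OF \<tau> c al] by simp
  also have "\<dots> = (?M ** (transpose (Omega d) ** Omega d)) *v snd (\<phi> (0, t))"
    by (simp add: matrix_vector_mul_assoc)
  also have "\<dots> = snd (\<phi> (0, t))" using OtO_inv[OF indep] by simp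
  finally show ?thesis by simp
qed

end

context hom_setup
begin

lemma alpha_struct:
  assumes lin: "linear (\<lambda>x. fst (\<phi> (x, 0)))"
    and injA: "inj (\<lambda>x. fst (\<phi> (x, 0)))"
    and distinct: "\<forall>i. inj (d i)"
  shows "\<exists>\<tau> c. \<tau> permutes (UNIV :: 'n set) \<and> (\<forall>k. c k \<noteq> 0) \<and>
            (\<forall>x. fst (\<phi> (x, 0)) = (Pmat \<tau> ** diag_mat c) *v x)"
proof -
  define \<alpha> where "\<alpha> x = fst (\<phi> (x, 0))" for x
  have lin': "linear \<alpha>" using lin unfolding \<alpha>_def .
  obtain i0 :: 'm where True by blast
  define t0 where "t0 = axis i0 (1::real)"
  define a where "a k = exp (d i0 k)" for k
  define \<mu> where "\<mu> j = exp ((Omega d *v snd (\<phi> (0, t0))) $ j)" for j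
  define e where "e k = \<alpha> (axis k 1)" for k
  have eig: "a k * e k $ j = \<mu> j * e k $ j" for k j
  proof -
    have ee0: "ee d t0 (axis k 1) = a k *\<^sub>R axis k 1"
      using Omega_axis[of d i0 1] by (simp add: vec_eq_iff ee_nth t0_def a_def) (simp add: axis_def)
    have "\<alpha> (ee d t0 (axis k 1)) = ee d (snd (\<phi> (0, t0))) (e k)"
      unfolding \<alpha>_def e_def by (rule conj)
    then have "a k *\<^sub>R e k = ee d (snd (\<phi> (0, t0))) (e k)"
      unfolding ee0 linear_scale[OF lin'] e_def .
    then show ?thesis by (simp add: vec_eq_iff ee_nth \<mu>_def)
  qed
  have enz: "e k \<noteq> 0" for k
  proof
    assume "e k = 0"
    then have "\<alpha> (axis k 1) = \<alpha> 0" unfolding e_def using linear_0[OF lin'] by simp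
    then have "axis k (1::real) = 0" using injA unfolding \<alpha>_def inj_def by blast
    then show False by simp
  qed
  define \<sigma> where "\<sigma> k = (SOME j. e k $ j \<noteq> 0)" for k
  have \<sigma>p: "e k $ \<sigma> k \<noteq> 0" for k
  proof -
    have "\<exists>j. e k $ j \<noteq> 0" using enz[of k] by (auto simp: vec_eq_iff)
    then show ?thesis unfolding \<sigma>_def by (rule someI_ex)
  qed
  have supp: "e k $ j \<noteq> 0 \<Longrightarrow> \<mu> j = a k" for k j using eig[of k j] by simp
  have ainj: "a k = a k' \<Longrightarrow> k = k'" for k k'
    using distinct unfolding a_def inj_def by auto
  have \<sigma>inj: "inj \<sigma>"
  proof (rule injI)
    fix k k' assume "\<sigma> k = \<sigma> k'"
    then have "a k = a k'" using supp[OF \<sigma>p[of k]] supp[OF \<sigma>p[of k']] by simp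
    then show "k = k'" by (rule ainj)
  qed
  have \<sigma>surj: "surj \<sigma>" using finite_UNIV_inj_surj[OF _ \<sigma>inj] by simp
  have only: "e k $ j \<noteq> 0 \<Longrightarrow> j = \<sigma> k" for k j
  proof -
    assume h: "e k $ j \<noteq> 0"
    obtain k' where j: "j = \<sigma> k'" using \<sigma>surj by (metis surjD)
    have "a k = a k'" using supp[OF h] supp[OF \<sigma>p[of k']] j by simp
    then show ?thesis using ainj j by metis
  qed
  define c where "c k = e k $ \<sigma> k" for k
  have bij\<sigma>: "bij \<sigma>" using \<sigma>inj \<sigma>surj by (simp add: bij_def)
  have perm: "\<sigma> permutes (UNIV :: 'n set)" by (rule bij_imp_permutes) (use bij\<sigma> in auto)
  have form: "\<alpha> x = (Pmat \<sigma> ** diag_mat c) *v x" for x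
  proof -
    have "\<alpha> x = (\<Sum>k\<in>UNIV. x $ k *\<^sub>R e k)"
      unfolding e_def by (subst basis_exp[of x]) (simp add: linear_sum[OF lin'] linear_scale[OF lin'])
    moreover have "(\<Sum>k\<in>UNIV. x $ k *\<^sub>R e k) $ i = c (inv \<sigma> i) * x $ (inv \<sigma> i)" for i
    proof -
      have "e k $ i = (if k = inv \<sigma> i then c k else 0)" for k
      proof (cases "k = inv \<sigma> i")
        case True
        then show ?thesis using permutes_inverses[OF perm] c_def by auto
      next
        case False
        then have "i \<noteq> \<sigma> k" using permutes_inverses[OF perm] by auto
        then show ?thesis using only False by auto
      qed
      then show ?thesis by (simp add: sum_component mult_if0 sum.delta' mult.commute)
    qed
    ultimately show ?thesis by (simp add: vec_eq_iff PD_nth)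
  qed
  show ?thesis
    by (rule exI[of _ \<sigma>], rule exI[of _ c]) (use perm \<sigma>p form in \<open>auto simp: \<alpha>_def c_def\<close>)
qed

end

lemma series_diag:
  "(\<Sum>k. (1 / fact (k + 1)) *\<^sub>R matpow (tDelta d s) k)
   = diag_mat (\<lambda>j. if (Omega d *v s) $ j = 0 then 1 else (exp ((Omega d *v s) $ j) - 1) / (Omega d *v s) $ j)"
proof -
  have "(\<lambda>k. (1 / fact (k + 1)) *\<^sub>R matpow (tDelta d s) k) sums
     diag_mat (\<lambda>j. if (Omega d *v s) $ j = 0 then 1 else (exp ((Omega d *v s) $ j) - 1) / (Omega d *v s) $ j)"
    unfolding tDelta_diag matpow_diag by (rule diag_sums) (rule phi1_sums)
  then show ?thesis by (rule sums_unique[symmetric])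
qed

context hom_setup
begin

lemma beta_struct:
  assumes surjD: "\<forall>s. \<exists>t. snd (\<phi> (0, t)) = s"
    and N: "\<forall>t. snd (\<phi> (0, t)) = N *v t"
  shows "\<exists>U :: real^'m^'n. \<forall>t. fst (\<phi> (0, t)) =
            (\<Sum>k. (1 / fact (k + 1)) *\<^sub>R matpow (tDelta d (snd (\<phi> (0, t)))) k) *v (U *v t)"
proof -
  define \<beta> where "\<beta> t = fst (\<phi> (0, t))" for t
  define lm where "lm t k = (Omega d *v snd (\<phi> (0, t))) $ k" for t k
  have coc: "\<beta> (t + s) $ k = \<beta> t $ k + exp (lm t k) * \<beta> s $ k" for t s k
    unfolding \<beta>_def lm_def using beta_coc[of t s] by (simp add: ee_nth)
  obtain i0 :: 'm where True by blast
  obtain s0 where s0: "snd (\<phi> (0, s0)) = axis i0 1" using surjD by blast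
  have ls0: "lm s0 k = d i0 k" for k unfolding lm_def s0 by (simp add: Omega_axis)
  define c where "c k = \<beta> s0 $ k / (exp (lm s0 k) - 1)" for k
  have bform: "\<beta> t $ k = c k * (exp (lm t k) - 1)" for t k
  proof -
    have ne: "exp (lm s0 k) - 1 \<noteq> 0" using ls0[of k] nonsing[of i0 k] by simp
    have "\<beta> t $ k + exp (lm t k) * \<beta> s0 $ k = \<beta> s0 $ k + exp (lm s0 k) * \<beta> t $ k"
      using coc[of t s0 k] coc[of s0 t k] by (simp add: add.commute)
    then have "\<beta> t $ k * (exp (lm s0 k) - 1) = \<beta> s0 $ k * (exp (lm t k) - 1)"
      by (simp add: algebra_simps)
    then show ?thesis using ne unfolding c_def by (simp add: field_simps)
  qed
  define U where "U = diag_mat c ** Omega d ** N"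
  have Ut: "(U *v t) $ k = c k * lm t k" for t k
    unfolding U_def lm_def N[rule_format] by (simp add: matrix_vector_mul_assoc[symmetric] diag_mat_mulv)
  have "\<beta> t = (\<Sum>k. (1 / fact (k + 1)) *\<^sub>R matpow (tDelta d (snd (\<phi> (0, t)))) k) *v (U *v t)" for t
    unfolding series_diag diag_mat_mulv
    by (simp add: vec_eq_iff Ut bform) (simp add: lm_def field_simps)
  then show ?thesis unfolding \<beta>_def by blast
qed

end

lemma PD_inj:
  fixes \<tau> :: "'n::finite \<Rightarrow> 'n"
  assumes \<tau>: "\<tau> permutes UNIV" and c: "\<forall>k. c k \<noteq> 0"
  shows "inj ((*v) (Pmat \<tau> ** diag_mat c))"
proof (rule injI)
  fix x y :: "real^'n"
  assume h: "(Pmat \<tau> ** diag_mat c) *v x = (Pmat \<tau> ** diag_mat c) *v y"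
  show "x = y"
  proof (subst vec_eq_iff, intro allI)
    fix k
    have "((Pmat \<tau> ** diag_mat c) *v x) $ (\<tau> k) = ((Pmat \<tau> ** diag_mat c) *v y) $ (\<tau> k)"
      using h by simp
    then show "x $ k = y $ k" using c unfolding PD_nth permutes_inverses[OF \<tau>] by simp
  qed
qed

lemma inj_matrix_inverse:
  fixes A :: "real^'n::finite^'n"
  assumes "inj ((*v) A)"
  obtains B where "A ** B = mat 1" "B ** A = mat 1"
proof -
  have "invertible A" using assms invertible_left_inverse matrix_left_invertible_injective by blast
  then show ?thesis using that unfolding invertible_def by blast
qed

theorem mainTheorem2:
  fixes d :: "'m::finite \<Rightarrow> 'n::finite \<Rightarrow> real"
    and \<phi> :: "(real^'n) \<times> (real^'m) \<Rightarrow> (real^'n) \<times> (real^'m)"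
  assumes mn: "CARD('m) \<le> CARD('n)"
    and indep: "\<forall>c::'m \<Rightarrow> real. (\<Sum>i\<in>UNIV. c i *\<^sub>R Delta d i) = 0 \<longrightarrow> (\<forall>i. c i = 0)"
    and nonsing: "\<forall>i k. d i k \<noteq> 0"
    and traceless: "\<forall>i. (\<Sum>k\<in>UNIV. d i k) = 0"
    and distinct: "\<forall>i. inj (d i)"
    and endo: "lie_endo d \<phi>"
  shows "lie_auto d \<phi> \<longleftrightarrow>
    (let \<alpha> = (\<lambda>x. fst (\<phi> (x, 0))); \<beta> = (\<lambda>t. fst (\<phi> (0, t)));
         \<gamma> = (\<lambda>x. snd (\<phi> (x, 0))); \<delta> = (\<lambda>t. snd (\<phi> (0, t)))
     in (\<exists>\<tau> c. \<tau> permutes (UNIV :: 'n set) \<and> (\<forall>k. c k \<noteq> 0) \<and>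
            \<alpha> = (\<lambda>x. (Pmat \<tau> ** diag_mat c) *v x) \<and>
            \<delta> = (\<lambda>t. (matrix_inv (transpose (Omega d) ** Omega d) ** transpose (Omega d)
                        ** Pmat \<tau> ** Omega d) *v t)) \<and>
        \<gamma> = (\<lambda>x. 0) \<and>
        (\<exists>U :: real^'m^'n. \<forall>t. \<beta> t =
            (\<Sum>k. (1 / fact (k + 1)) *\<^sub>R matpow (tDelta d (\<delta> t)) k) *v (U *v t)))"
proof -
  have sm: "smooth \<phi>" and hom: "\<And>g h. \<phi> (gmul d g h) = gmul d (\<phi> g) (\<phi> h)"
    using endo unfolding lie_endo_def by auto
  interpret H: hom_setup d \<phi>
    by unfold_locales (use hom nonsing in auto)
  have gam: "(\<lambda>x. snd (\<phi> (x, 0))) = (\<lambda>x. 0)" using H.snd0 by auto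
  let ?N = "matrix_inv (transpose (Omega d) ** Omega d) ** transpose (Omega d)"
  show ?thesis unfolding Let_def
  proof
    assume auto: "lie_auto d \<phi>"
    then have bj: "bij \<phi>" unfolding lie_auto_def by auto
    have cphi: "continuous_on UNIV \<phi>"
      using sm unfolding smooth_def
      by (intro differentiable_imp_continuous_on differentiable_at_imp_differentiable_on)
         (metis iter_dd.simps(1))
    have ca: "continuous_on UNIV (\<lambda>x. fst (\<phi> (x, 0)))"
      by (intro continuous_intros continuous_on_compose2[OF cphi]) auto
    have lin: "linear (\<lambda>x. fst (\<phi> (x, 0)))"
      by (rule additive_cont_linear[OF H.alpha_add ca])
    have injA: "inj (\<lambda>x. fst (\<phi> (x, 0)))"
    proof (rule injI)
      fix x y assume "fst (\<phi> (x, 0)) = fst (\<phi> (y, 0))"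
      then have "\<phi> (x, 0) = \<phi> (y, 0)" using H.snd0 by (simp add: prod_eq_iff)
      then show "x = y" using bj unfolding bij_def inj_def by blast
    qed
    obtain \<tau> c where \<tau>: "\<tau> permutes (UNIV :: 'n set)" and c: "\<forall>k. c k \<noteq> 0"
      and al: "\<forall>x. fst (\<phi> (x, 0)) = (Pmat \<tau> ** diag_mat c) *v x"
      using H.alpha_struct[OF lin injA distinct] by blast
    have del: "\<forall>t. snd (\<phi> (0, t)) = (?N ** Pmat \<tau> ** Omega d) *v t"
      using H.delta_formula[OF indep \<tau> c al] by blast
    have surjD: "\<forall>s. \<exists>t. snd (\<phi> (0, t)) = s"
    proof
      fix s
      obtain p where "\<phi> p = (0, s)" using bj unfolding bij_def surj_def by metis
      then show "\<exists>t. snd (\<phi> (0, t)) = s" using H.decomp[of "fst p" "snd p"] by auto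
    qed
    show "(\<exists>\<tau> c. \<tau> permutes UNIV \<and> (\<forall>k. c k \<noteq> 0) \<and>
            (\<lambda>x. fst (\<phi> (x, 0))) = (\<lambda>x. (Pmat \<tau> ** diag_mat c) *v x) \<and>
            (\<lambda>t. snd (\<phi> (0, t))) = (\<lambda>t. (?N ** Pmat \<tau> ** Omega d) *v t)) \<and>
        (\<lambda>x. snd (\<phi> (x, 0))) = (\<lambda>x. 0) \<and>
        (\<exists>U :: real^'m^'n. \<forall>t. fst (\<phi> (0, t)) =
            (\<Sum>k. (1 / fact (k + 1)) *\<^sub>R matpow (tDelta d (snd (\<phi> (0, t)))) k) *v (U *v t))"
      using \<tau> c al del gam H.beta_struct[OF surjD del] by (auto simp: fun_eq_iff)
  next
    assume rhs: "(\<exists>\<tau> c. \<tau> permutes UNIV \<and> (\<forall>k. c k \<noteq> 0) \<and>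
            (\<lambda>x. fst (\<phi> (x, 0))) = (\<lambda>x. (Pmat \<tau> ** diag_mat c) *v x) \<and>
            (\<lambda>t. snd (\<phi> (0, t))) = (\<lambda>t. (?N ** Pmat \<tau> ** Omega d) *v t)) \<and>
        (\<lambda>x. snd (\<phi> (x, 0))) = (\<lambda>x. 0) \<and>
        (\<exists>U :: real^'m^'n. \<forall>t. fst (\<phi> (0, t)) =
            (\<Sum>k. (1 / fact (k + 1)) *\<^sub>R matpow (tDelta d (snd (\<phi> (0, t)))) k) *v (U *v t))"
    then obtain \<tau> c where \<tau>: "\<tau> permutes (UNIV :: 'n set)" and c: "\<forall>k. c k \<noteq> 0"
      and al0: "(\<lambda>x. fst (\<phi> (x, 0))) = (\<lambda>x. (Pmat \<tau> ** diag_mat c) *v x)"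
      and del0: "(\<lambda>t. snd (\<phi> (0, t))) = (\<lambda>t. (?N ** Pmat \<tau> ** Omega d) *v t)"
      by blast
    define A where "A = Pmat \<tau> ** diag_mat c"
    define N where "N = ?N ** Pmat \<tau> ** Omega d"
    have al: "\<forall>x. fst (\<phi> (x, 0)) = (Pmat \<tau> ** diag_mat c) *v x" using al0 by metis
    have alA: "fst (\<phi> (x, 0)) = A *v x" for x using al A_def by simp
    have delN: "snd (\<phi> (0, t)) = N *v t" for t using del0 N_def by metis
    have injN: "inj ((*v) N)"
    proof (rule injI)
      fix t t' assume h: "N *v t = N *v t'"
      have "(Omega d *v t) $ k = (Omega d *v t') $ k" for k
        using arg_cong[OF h, of "\<lambda>v. (Omega d *v v) $ (\<tau> k)"]
        unfolding delN[symmetric] H.omega_delta[OF \<tau> c al] Pmat_mulv permutes_inverses[OF \<tau>] .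
      then have "Omega d *v (t - t') = 0"
        by (simp add: vec_eq_iff matrix_vector_mult_diff_distrib)
      then show "t = t'" using Omega_inj[OF indep] by fastforce
    qed
    obtain Ni where N1: "N ** Ni = mat 1" and N2: "Ni ** N = mat 1"
      using inj_matrix_inverse[OF injN] by blast
    obtain Ai where A1: "A ** Ai = mat 1" and A2: "Ai ** A = mat 1"
      using inj_matrix_inverse[OF PD_inj[OF \<tau> c]] unfolding A_def by blast
    define \<beta> where "\<beta> t = fst (\<phi> (0, t))" for t
    have phi_eq: "\<phi> p = (A *v fst p + \<beta> (snd p), N *v snd p)" for p
      using H.decomp[of "fst p" "snd p"] alA delN \<beta>_def by simp
    define \<psi> where "\<psi> z = (Ai *v (fst z - \<beta> (Ni *v snd z)), Ni *v snd z)" for z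
    have r1: "\<phi> (\<psi> z) = z" for z
      unfolding phi_eq \<psi>_def
      by (simp add: matrix_vector_mul_assoc A1 N1 prod_eq_iff)
    have r2: "\<psi> (\<phi> p) = p" for p
      unfolding phi_eq \<psi>_def
      by (simp add: matrix_vector_mul_assoc A2 N2 prod_eq_iff)
    have injP: "inj \<phi>" using r2 by (metis injI)
    have bj: "bij \<phi>" using injP r1 by (metis bij_def surjI)
    have invP: "inv \<phi> = \<psi>" using inv_f_eq[OF injP r1] by auto
    have homP: "\<psi> (gmul d g h) = gmul d (\<psi> g) (\<psi> h)" for g h
    proof -
      have "\<phi> (gmul d (\<psi> g) (\<psi> h)) = \<phi> (\<psi> (gmul d g h))" using hom r1 by simp
      then show ?thesis using injP unfolding inj_def by metis
    qed
    define L where "L z = (Ai *v fst z, Ni *v snd z)" for z :: "(real^'n) \<times> (real^'m)"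
    define M where "M z = ((0::real^'n), Ni *v snd z)" for z :: "(real^'n) \<times> (real^'m)"
    define K where "K p = (- (Ai *v fst p), (0::real^'m))" for p :: "(real^'n) \<times> (real^'m)"
    have bL: "bounded_linear L" unfolding L_def
      by (intro bounded_linear_Pair bounded_linear_compose[OF matrix_vector_mul_bounded_linear]
            bounded_linear_fst bounded_linear_snd)
    have bM: "bounded_linear M" unfolding M_def
      by (intro bounded_linear_Pair bounded_linear_compose[OF matrix_vector_mul_bounded_linear]
            bounded_linear_fst bounded_linear_snd bounded_linear_zero)
    have bK: "bounded_linear K" unfolding K_def
      by (intro bounded_linear_Pair bounded_linear_minus bounded_linear_compose[OF matrix_vector_mul_bounded_linear]
            bounded_linear_fst bounded_linear_snd bounded_linear_zero)
    have psi_eq: "\<psi> = (\<lambda>z. L z + K (\<phi> (M z)))"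
      by (auto simp: fun_eq_iff \<psi>_def L_def K_def M_def \<beta>_def matrix_vector_mult_diff_distrib)
    have smP: "smooth \<psi>" unfolding psi_eq
      by (intro smooth_add smooth_linear[OF bL] smooth_post[OF _ bK] smooth_pre[OF sm bM])
    show "lie_auto d \<phi>"
      unfolding lie_auto_def lie_endo_def invP using endo bj smP homP
      unfolding lie_endo_def by blast
  qed
qed

end
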